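(* Let $p:C\to G$ be a normal covering of a connected graph $G$ with deck transformation group $\mathcal{D}$, let $\mathcal{T}=(T,(V_t)_{t\in T})$ be a regular $\mathcal{D}$-canonical tree-decomposition of $C$, and let $\mathcal{H}=(H,(G_h)_{h\in H})$ be defined from $\mathcal{T}$ via $p$ as in the context. Then $\mathcal{H}$ is an honest graph-decomposition of $G$.
   Context: Graphs may have loops and parallel edges and are viewed as 1-complexes; covering spaces are connected. A tree-decomposition $(T,(V_t))$ of $C$ ($T$ a tree, $V_t\subseteq V(C)$ non-empty) satisfies $C=\bigcup_tC[V_t]$ and $\{t:v\in V_t\}$ induces a connected subtree for every vertex $v$. Each edge $t_1t_2$ of $T$ induces the separation $\{\bigcup_{s\in T_1}V_s,\bigcup_{s\in T_2}V_s\}$ ($T_i$ the component of $T-t_1t_2$ containing $t_i$); the decomposition is regular if no such separation has a side equal to $V(C)$. It is $\mathcal{D}$-canonical if there is a group homomorphism $\varphi\mapsto(\varphi,\psi_\varphi)$ from $\mathcal{D}$ to pairs with $\psi_\varphi$ an automorphism of $T$ and $\varphi(V_t)=V_{\psi_\varphi(t)}$ for all $t$; for regular decompositions $\psi_\varphi$ is unique, giving an action of $\mathcal{D}$ on $T$. Construction: $H=T/\mathcal{D}$ is the orbit graph (vertices the $\mathcal{D}$-orbits of nodes, edges the orbits of edges, the orbit of an edge joining the orbits of its endpoints), and $G_h=p(C[V_t])$ for any $t\in h$ (independent of choice). A graph-decomposition of $G$ is a pair $(H,(G_h))$ with subgraphs $G_h\subseteq G$, $G=\bigcup_hG_h$,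 and $H[\{h:v\in G_h\}]$ connected for each vertex $v$; it is honest if $G_h\cap G_{h'}\neq\emptyset$ for every edge $hh'$ of $H$. *)

theory Defs
  imports Main
begin

text \<open>A graph is given by vertices, darts (= oriented edges / half-edge pairs),
  the tail of each dart and the fixed-point-free involution reversing a dart.
  An edge is a pair {d, rev d}; a loop is an edge with tail d = head d.\<close>

record ('v,'d) dgraph =
  gverts :: "'v set"
  gdarts :: "'d set"
  gtail  :: "'d \<Rightarrow> 'v"
  grev   :: "'d \<Rightarrow> 'd"

definition ghead :: "('v,'d) dgraph \<Rightarrow> 'd \<Rightarrow> 'v" where
  "ghead G d = gtail G (grev G d)"

definition wf_graph :: "('v,'d) dgraph \<Rightarrow> bool" where
  "wf_graph G \<longleftrightarrow> (\<forall>d\<in>gdarts G. gtail G d \<in> gverts G \<and> grev G d \<in> gdarts G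
      \<and> grev G (grev G d) = d \<and> grev G d \<noteq> d)"

definition gadj :: "('v,'d) dgraph \<Rightarrow> ('v \<times> 'v) set" where
  "gadj G = {(gtail G d, ghead G d) | d. d \<in> gdarts G}"

definition gconnected :: "('v,'d) dgraph \<Rightarrow> bool" where
  "gconnected G \<longleftrightarrow> gverts G \<noteq> {} \<and>
     (\<forall>u\<in>gverts G. \<forall>v\<in>gverts G. (u, v) \<in> (gadj G)\<^sup>*)"

definition induced :: "('v,'d) dgraph \<Rightarrow> 'v set \<Rightarrow> ('v,'d) dgraph" where
  "induced G X = \<lparr> gverts = X,
      gdarts = {d \<in> gdarts G. gtail G d \<in> X \<and> ghead G d \<in> X},
      gtail = gtail G, grev = grev G \<rparr>"

definition subgraph :: "('v,'d) dgraph \<Rightarrow> ('v,'d) dgraph \<Rightarrow> bool" where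
  "subgraph S G \<longleftrightarrow> wf_graph S \<and> gverts S \<subseteq> gverts G \<and> gdarts S \<subseteq> gdarts G
      \<and> gtail S = gtail G \<and> grev S = grev G"

definition del_edge :: "('v,'d) dgraph \<Rightarrow> 'd \<Rightarrow> ('v,'d) dgraph" where
  "del_edge G d = G\<lparr> gdarts := gdarts G - {d, grev G d} \<rparr>"

text \<open>A cycle: a nonempty cyclic sequence of darts, consecutive ones meeting,
  with pairwise distinct vertices and pairwise distinct edges
  (length 1 = loop, length 2 = pair of parallel edges).\<close>
definition is_cycle :: "('v,'d) dgraph \<Rightarrow> 'd list \<Rightarrow> bool" where
  "is_cycle G ds \<longleftrightarrow> ds \<noteq> [] \<and> set ds \<subseteq> gdarts G
     \<and> (\<forall>i < length ds. ghead G (ds ! i) = gtail G (ds ! ((i + 1) mod length ds)))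
     \<and> distinct (map (gtail G) ds)
     \<and> (\<forall>i < length ds. \<forall>j < length ds. i \<noteq> j \<longrightarrow>
            ds ! j \<noteq> ds ! i \<and> ds ! j \<noteq> grev G (ds ! i))"

definition is_tree :: "('v,'d) dgraph \<Rightarrow> bool" where
  "is_tree T \<longleftrightarrow> wf_graph T \<and> gconnected T \<and> (\<nexists>ds. is_cycle T ds)"

text \<open>Automorphisms, represented as a pair (vertex map, dart map); normalised to be
  the identity outside the graph so that automorphisms are uniquely represented.\<close>
definition is_aut :: "('v,'d) dgraph \<Rightarrow> ('v \<Rightarrow> 'v) \<times> ('d \<Rightarrow> 'd) \<Rightarrow> bool" where
  "is_aut G \<phi> \<longleftrightarrow> bij_betw (fst \<phi>) (gverts G) (gverts G)
     \<and> bij_betw (snd \<phi>) (gdarts G) (gdarts G)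
     \<and> (\<forall>d\<in>gdarts G. fst \<phi> (gtail G d) = gtail G (snd \<phi> d)
                     \<and> snd \<phi> (grev G d) = grev G (snd \<phi> d))
     \<and> (\<forall>v. v \<notin> gverts G \<longrightarrow> fst \<phi> v = v)
     \<and> (\<forall>d. d \<notin> gdarts G \<longrightarrow> snd \<phi> d = d)"

definition comp_pair :: "('a \<Rightarrow> 'a) \<times> ('b \<Rightarrow> 'b) \<Rightarrow> ('a \<Rightarrow> 'a) \<times> ('b \<Rightarrow> 'b)
                          \<Rightarrow> ('a \<Rightarrow> 'a) \<times> ('b \<Rightarrow> 'b)" where
  "comp_pair \<phi> \<chi> = (fst \<phi> \<circ> fst \<chi>, snd \<phi> \<circ> snd \<chi>)"

definition is_covering :: "('v,'d) dgraph \<Rightarrow> ('w,'e) dgraph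
                          \<Rightarrow> ('v \<Rightarrow> 'w) \<times> ('d \<Rightarrow> 'e) \<Rightarrow> bool" where
  "is_covering C G p \<longleftrightarrow> wf_graph C \<and> wf_graph G \<and> gconnected C
     \<and> fst p ` gverts C = gverts G
     \<and> (\<forall>d\<in>gdarts C. snd p d \<in> gdarts G
            \<and> fst p (gtail C d) = gtail G (snd p d)
            \<and> snd p (grev C d) = grev G (snd p d))
     \<and> (\<forall>x\<in>gverts C. bij_betw (snd p) {d \<in> gdarts C. gtail C d = x}
                                       {e \<in> gdarts G. gtail G e = fst p x})"

definition deck :: "('v,'d) dgraph \<Rightarrow> ('v \<Rightarrow> 'w) \<times> ('d \<Rightarrow> 'e)
                    \<Rightarrow> (('v \<Rightarrow> 'v) \<times> ('d \<Rightarrow> 'd)) set" where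
  "deck C p = {\<phi>. is_aut C \<phi>
      \<and> (\<forall>v\<in>gverts C. fst p (fst \<phi> v) = fst p v)
      \<and> (\<forall>d\<in>gdarts C. snd p (snd \<phi> d) = snd p d)}"

definition is_normal_covering :: "('v,'d) dgraph \<Rightarrow> ('w,'e) dgraph
                          \<Rightarrow> ('v \<Rightarrow> 'w) \<times> ('d \<Rightarrow> 'e) \<Rightarrow> bool" where
  "is_normal_covering C G p \<longleftrightarrow> is_covering C G p
     \<and> (\<forall>x\<in>gverts C. \<forall>y\<in>gverts C. fst p x = fst p y \<longrightarrow> (\<exists>\<phi>\<in>deck C p. fst \<phi> x = y))"

definition tree_decomposition :: "('v,'d) dgraph \<Rightarrow> ('t,'a) dgraph \<Rightarrow> ('t \<Rightarrow> 'v set) \<Rightarrow> bool" where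
  "tree_decomposition C T V \<longleftrightarrow> is_tree T
     \<and> (\<forall>t\<in>gverts T. V t \<noteq> {} \<and> V t \<subseteq> gverts C)
     \<and> gverts C = (\<Union>t\<in>gverts T. V t)
     \<and> gdarts C = (\<Union>t\<in>gverts T. gdarts (induced C (V t)))
     \<and> (\<forall>v\<in>gverts C. gconnected (induced T {t \<in> gverts T. v \<in> V t}))"

text \<open>For a dart d of T from t1 to t2, the side of the induced separation belonging
  to t1: the union of the bags of the component of T - t1t2 containing t1.\<close>
definition sep_side :: "('t,'a) dgraph \<Rightarrow> ('t \<Rightarrow> 'v set) \<Rightarrow> 'a \<Rightarrow> 'v set" where
  "sep_side T V d = (\<Union>{V s | s. s \<in> gverts T \<and> (gtail T d, s) \<in> (gadj (del_edge T d))\<^sup>*})"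

definition regular_td :: "('v,'d) dgraph \<Rightarrow> ('t,'a) dgraph \<Rightarrow> ('t \<Rightarrow> 'v set) \<Rightarrow> bool" where
  "regular_td C T V \<longleftrightarrow> (\<forall>d\<in>gdarts T. sep_side T V d \<noteq> gverts C)"

definition canonical_via :: "('v,'d) dgraph \<Rightarrow> ('t,'a) dgraph \<Rightarrow> ('t \<Rightarrow> 'v set)
    \<Rightarrow> (('v \<Rightarrow> 'v) \<times> ('d \<Rightarrow> 'd)) set
    \<Rightarrow> (('v \<Rightarrow> 'v) \<times> ('d \<Rightarrow> 'd) \<Rightarrow> ('t \<Rightarrow> 't) \<times> ('a \<Rightarrow> 'a)) \<Rightarrow> bool" where
  "canonical_via C T V Dk \<psi> \<longleftrightarrow>
     (\<forall>\<phi>\<in>Dk. is_aut T (\<psi> \<phi>) \<and> (\<forall>t\<in>gverts T. fst \<phi> ` V t = V (fst (\<psi> \<phi>) t)))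
   \<and> (\<forall>\<phi>\<in>Dk. \<forall>\<chi>\<in>Dk. \<psi> (comp_pair \<phi> \<chi>) = comp_pair (\<psi> \<phi>) (\<psi> \<chi>))"

definition is_canonical :: "('v,'d) dgraph \<Rightarrow> ('t,'a) dgraph \<Rightarrow> ('t \<Rightarrow> 'v set)
    \<Rightarrow> (('v \<Rightarrow> 'v) \<times> ('d \<Rightarrow> 'd)) set \<Rightarrow> bool" where
  "is_canonical C T V Dk \<longleftrightarrow> (\<exists>\<psi>. canonical_via C T V Dk \<psi>)"

text \<open>H is a multigraph given by vertices, edges and the (1- or 2-element) set of
  ends of each edge; a loop has one end.\<close>
record ('h,'f) ugraph =
  uverts :: "'h set"
  uedges :: "'f set"
  uends  :: "'f \<Rightarrow> 'h set"

definition uconnected_on :: "('h,'f) ugraph \<Rightarrow> 'h set \<Rightarrow> bool" where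
  "uconnected_on H X \<longleftrightarrow> X \<noteq> {} \<and> X \<subseteq> uverts H \<and>
     (\<forall>x\<in>X. \<forall>y\<in>X. (x, y) \<in>
        {(a, b). a \<in> X \<and> b \<in> X \<and> (\<exists>f\<in>uedges H. uends H f = {a, b})}\<^sup>*)"

definition graph_decomposition :: "('w,'e) dgraph \<Rightarrow> ('h,'f) ugraph
     \<Rightarrow> ('h \<Rightarrow> ('w,'e) dgraph) \<Rightarrow> bool" where
  "graph_decomposition G H Gh \<longleftrightarrow>
     (\<forall>h\<in>uverts H. subgraph (Gh h) G)
   \<and> gverts G = (\<Union>h\<in>uverts H. gverts (Gh h))
   \<and> gdarts G = (\<Union>h\<in>uverts H. gdarts (Gh h))
   \<and> (\<forall>v\<in>gverts G. uconnected_on H {h \<in> uverts H. v \<in> gverts (Gh h)})"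

definition honest :: "('w,'e) dgraph \<Rightarrow> ('h,'f) ugraph
     \<Rightarrow> ('h \<Rightarrow> ('w,'e) dgraph) \<Rightarrow> bool" where
  "honest G H Gh \<longleftrightarrow> graph_decomposition G H Gh
     \<and> (\<forall>f\<in>uedges H. \<forall>h h'. uends H f = {h, h'} \<longrightarrow> gverts (Gh h) \<inter> gverts (Gh h') \<noteq> {})"

definition node_orbit :: "(('v \<Rightarrow> 'v) \<times> ('d \<Rightarrow> 'd)) set
    \<Rightarrow> (('v \<Rightarrow> 'v) \<times> ('d \<Rightarrow> 'd) \<Rightarrow> ('t \<Rightarrow> 't) \<times> ('a \<Rightarrow> 'a)) \<Rightarrow> 't \<Rightarrow> 't set" where
  "node_orbit Dk \<psi> t = {fst (\<psi> \<phi>) t | \<phi>. \<phi> \<in> Dk}"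

text \<open>Edges of T are the sets {d, rev d}; edges of H are their orbits.\<close>
definition orbit_graph :: "('t,'a) dgraph \<Rightarrow> (('v \<Rightarrow> 'v) \<times> ('d \<Rightarrow> 'd)) set
    \<Rightarrow> (('v \<Rightarrow> 'v) \<times> ('d \<Rightarrow> 'd) \<Rightarrow> ('t \<Rightarrow> 't) \<times> ('a \<Rightarrow> 'a))
    \<Rightarrow> ('t set, 'a set set) ugraph" where
  "orbit_graph T Dk \<psi> = \<lparr>
     uverts = {node_orbit Dk \<psi> t | t. t \<in> gverts T},
     uedges = {{snd (\<psi> \<phi>) ` {d, grev T d} | \<phi>. \<phi> \<in> Dk} | d. d \<in> gdarts T},
     uends = (\<lambda>E. {node_orbit Dk \<psi> (gtail T d) | d. d \<in> \<Union>E}) \<rparr>"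

definition image_graph :: "('w,'e) dgraph \<Rightarrow> ('v \<Rightarrow> 'w) \<times> ('d \<Rightarrow> 'e)
    \<Rightarrow> ('v,'d) dgraph \<Rightarrow> ('w,'e) dgraph" where
  "image_graph G p S = \<lparr> gverts = fst p ` gverts S, gdarts = snd p ` gdarts S,
       gtail = gtail G, grev = grev G \<rparr>"

text \<open>G_h = p(C[V_t]) for (a chosen) t in h.\<close>
definition projected_parts :: "('v,'d) dgraph \<Rightarrow> ('w,'e) dgraph
    \<Rightarrow> ('v \<Rightarrow> 'w) \<times> ('d \<Rightarrow> 'e) \<Rightarrow> ('t,'a) dgraph \<Rightarrow> ('t \<Rightarrow> 'v set)
    \<Rightarrow> 't set \<Rightarrow> ('w,'e) dgraph" where
  "projected_parts C G p T V h =
     image_graph G p (induced C (V (SOME t. t \<in> h \<and> t \<in> gverts T)))"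

end

theory Submission
  imports Defs
begin

lemma aut_facts:
  assumes "is_aut G \<phi>" "wf_graph G"
  shows "\<And>v. v \<in> gverts G \<Longrightarrow> fst \<phi> v \<in> gverts G"
    and "\<And>d. d \<in> gdarts G \<Longrightarrow> snd \<phi> d \<in> gdarts G"
    and "\<And>d. d \<in> gdarts G \<Longrightarrow> fst \<phi> (gtail G d) = gtail G (snd \<phi> d)"
    and "\<And>d. d \<in> gdarts G \<Longrightarrow> snd \<phi> (grev G d) = grev G (snd \<phi> d)"
    and "\<And>d. d \<in> gdarts G \<Longrightarrow> fst \<phi> (ghead G d) = ghead G (snd \<phi> d)"
  using assms unfolding is_aut_def wf_graph_def ghead_def bij_betw_def
  by (blast, blast, blast, blast, metis)

lemma deck_id: "(id, id) \<in> deck C p"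
  unfolding deck_def is_aut_def by auto

lemma deck_comp:
  assumes "\<phi> \<in> deck C p" "\<chi> \<in> deck C p"
  shows "comp_pair \<phi> \<chi> \<in> deck C p"
proof -
  have a: "is_aut C \<phi>" "is_aut C \<chi>" using assms unfolding deck_def by auto
  have "bij_betw (fst \<phi> \<circ> fst \<chi>) (gverts C) (gverts C)"
    using a unfolding is_aut_def by (meson bij_betw_trans)
  moreover have "bij_betw (snd \<phi> \<circ> snd \<chi>) (gdarts C) (gdarts C)"
    using a unfolding is_aut_def by (meson bij_betw_trans)
  moreover have "\<forall>d\<in>gdarts C. (fst \<phi> \<circ> fst \<chi>) (gtail C d) = gtail C ((snd \<phi> \<circ> snd \<chi>) d)
                     \<and> (snd \<phi> \<circ> snd \<chi>) (grev C d) = grev C ((snd \<phi> \<circ> snd \<chi>) d)"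
    using a unfolding is_aut_def bij_betw_def by auto
  moreover have "\<forall>v\<in>gverts C. fst p ((fst \<phi> \<circ> fst \<chi>) v) = fst p v"
  proof
    fix v assume v: "v \<in> gverts C"
    then have "fst \<chi> v \<in> gverts C" using a unfolding is_aut_def bij_betw_def by blast
    then show "fst p ((fst \<phi> \<circ> fst \<chi>) v) = fst p v" using assms v unfolding deck_def by simp
  qed
  moreover have "\<forall>d\<in>gdarts C. snd p ((snd \<phi> \<circ> snd \<chi>) d) = snd p d"
  proof
    fix v assume v: "v \<in> gdarts C"
    then have "snd \<chi> v \<in> gdarts C" using a unfolding is_aut_def bij_betw_def by blast
    then show "snd p ((snd \<phi> \<circ> snd \<chi>) v) = snd p v" using assms v unfolding deck_def by simp
  qed
  moreover have "\<forall>v. v \<notin> gverts C \<longrightarrow> (fst \<phi> \<circ> fst \<chi>) v = v"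
    using a unfolding is_aut_def by simp
  moreover have "\<forall>d. d \<notin> gdarts C \<longrightarrow> (snd \<phi> \<circ> snd \<chi>) d = d"
    using a unfolding is_aut_def by simp
  ultimately show ?thesis unfolding deck_def is_aut_def comp_pair_def
    by (simp only: fst_conv snd_conv mem_Collect_eq)
qed

lemma deck_inv:
  assumes "\<phi> \<in> deck C p"
  shows "\<exists>\<phi>'\<in>deck C p. comp_pair \<phi>' \<phi> = (id, id)"
proof -
  have a: "is_aut C \<phi>" and pv: "\<forall>v\<in>gverts C. fst p (fst \<phi> v) = fst p v"
    and pd: "\<forall>d\<in>gdarts C. snd p (snd \<phi> d) = snd p d"
    using assms unfolding deck_def by auto
  define f where "f v = (if v \<in> gverts C then inv_into (gverts C) (fst \<phi>) v else v)" for v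
  define g where "g d = (if d \<in> gdarts C then inv_into (gdarts C) (snd \<phi>) d else d)" for d
  have bf: "bij_betw (fst \<phi>) (gverts C) (gverts C)" and bg: "bij_betw (snd \<phi>) (gdarts C) (gdarts C)"
    and ta: "\<forall>d\<in>gdarts C. fst \<phi> (gtail C d) = gtail C (snd \<phi> d)
                     \<and> snd \<phi> (grev C d) = grev C (snd \<phi> d)"
    and oa: "\<forall>v. v \<notin> gverts C \<longrightarrow> fst \<phi> v = v" "\<forall>d. d \<notin> gdarts C \<longrightarrow> snd \<phi> d = d"
    using a unfolding is_aut_def by auto
  have f1: "f (fst \<phi> v) = v" for v
  proof (cases "v \<in> gverts C")
    case True
    then have "fst \<phi> v \<in> gverts C" using bf unfolding bij_betw_def by blast
    then show ?thesis using True bf unfolding f_def bij_betw_def by (simp add: inv_into_f_f)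
  next
    case False
    then show ?thesis using oa unfolding f_def by simp
  qed
  have g1: "g (snd \<phi> d) = d" for d
  proof (cases "d \<in> gdarts C")
    case True
    then have "snd \<phi> d \<in> gdarts C" using bg unfolding bij_betw_def by blast
    then show ?thesis using True bg unfolding g_def bij_betw_def by (simp add: inv_into_f_f)
  next
    case False
    then show ?thesis using oa unfolding g_def by simp
  qed
  have f2: "v \<in> gverts C \<Longrightarrow> fst \<phi> (f v) = v" for v
    using bf unfolding f_def bij_betw_def by (simp add: f_inv_into_f)
  have g2: "d \<in> gdarts C \<Longrightarrow> snd \<phi> (g d) = d" for d
    using bg unfolding g_def bij_betw_def by (simp add: f_inv_into_f)
  have fv: "v \<in> gverts C \<Longrightarrow> f v \<in> gverts C" for v
    using bf unfolding f_def bij_betw_def by (simp add: inv_into_into)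
  have gv: "d \<in> gdarts C \<Longrightarrow> g d \<in> gdarts C" for d
    using bg unfolding g_def bij_betw_def by (simp add: inv_into_into)
  have b1: "bij_betw f (gverts C) (gverts C)"
    using bij_betw_inv_into[OF bf] by (rule bij_betw_cong[THEN iffD1, rotated]) (simp add: f_def)
  have b2: "bij_betw g (gdarts C) (gdarts C)"
    using bij_betw_inv_into[OF bg] by (rule bij_betw_cong[THEN iffD1, rotated]) (simp add: g_def)
  have t: "\<forall>d\<in>gdarts C. f (gtail C d) = gtail C (g d) \<and> g (grev C d) = grev C (g d)"
  proof
    fix d assume d: "d \<in> gdarts C"
    have gd: "g d \<in> gdarts C" using gv d .
    have e: "snd \<phi> (g d) = d" using g2 d .
    have "f (gtail C d) = f (fst \<phi> (gtail C (g d)))" using ta gd e by metis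
    also have "\<dots> = gtail C (g d)" by (rule f1)
    finally have 1: "f (gtail C d) = gtail C (g d)" .
    have "g (grev C d) = g (snd \<phi> (grev C (g d)))" using ta gd e by metis
    also have "\<dots> = grev C (g d)" by (rule g1)
    finally show "f (gtail C d) = gtail C (g d) \<and> g (grev C d) = grev C (g d)" using 1 by simp
  qed
  have o: "\<forall>v. v \<notin> gverts C \<longrightarrow> f v = v" "\<forall>d. d \<notin> gdarts C \<longrightarrow> g d = d"
    unfolding f_def g_def by auto
  have p1: "\<forall>v\<in>gverts C. fst p (f v) = fst p v"
  proof
    fix v assume v: "v \<in> gverts C"
    have "fst p (f v) = fst p (fst \<phi> (f v))" using pv fv[OF v] by simp
    also have "\<dots> = fst p v" using f2[OF v] by simp
    finally show "fst p (f v) = fst p v" .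
  qed
  have p2: "\<forall>d\<in>gdarts C. snd p (g d) = snd p d"
  proof
    fix v assume v: "v \<in> gdarts C"
    have "snd p (g v) = snd p (snd \<phi> (g v))" using pd gv[OF v] by simp
    also have "\<dots> = snd p v" using g2[OF v] by simp
    finally show "snd p (g v) = snd p v" .
  qed
  have "(f, g) \<in> deck C p" unfolding deck_def is_aut_def
    using b1 b2 t o p1 p2 by (simp only: fst_conv snd_conv mem_Collect_eq)
  moreover have "comp_pair (f, g) \<phi> = (id, id)"
    unfolding comp_pair_def using f1 g1 by (simp add: fun_eq_iff)
  ultimately show ?thesis by blast
qed

lemma image_sub:
  assumes wfC: "wf_graph C" and wfG: "wf_graph G" and X: "X \<subseteq> gverts C"
    and pv: "\<forall>v\<in>gverts C. fst p v \<in> gverts G"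
    and pd: "\<forall>d\<in>gdarts C. snd p d \<in> gdarts G \<and> fst p (gtail C d) = gtail G (snd p d)
            \<and> snd p (grev C d) = grev G (snd p d)"
  shows "subgraph (image_graph G p (induced C X)) G"
proof -
  have "\<forall>e\<in>snd p ` {d \<in> gdarts C. gtail C d \<in> X \<and> ghead C d \<in> X}.
     gtail G e \<in> fst p ` X \<and> grev G e \<in> snd p ` {d \<in> gdarts C. gtail C d \<in> X \<and> ghead C d \<in> X}
       \<and> grev G (grev G e) = e \<and> grev G e \<noteq> e"
  proof
    fix e assume "e \<in> snd p ` {d \<in> gdarts C. gtail C d \<in> X \<and> ghead C d \<in> X}"
    then obtain d where d: "d \<in> gdarts C" "gtail C d \<in> X" "ghead C d \<in> X" "e = snd p d" by auto
    have r: "grev C d \<in> gdarts C" "gtail C (grev C d) \<in> X" "ghead C (grev C d) \<in> X"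
      using d wfC unfolding wf_graph_def ghead_def by auto
    show "gtail G e \<in> fst p ` X \<and> grev G e \<in> snd p ` {d \<in> gdarts C. gtail C d \<in> X \<and> ghead C d \<in> X}
       \<and> grev G (grev G e) = e \<and> grev G e \<noteq> e"
      using d r pd wfG unfolding wf_graph_def by (metis (mono_tags, lifting) image_eqI mem_Collect_eq)
  qed
  then have "wf_graph (image_graph G p (induced C X))"
    unfolding wf_graph_def image_graph_def induced_def by simp
  then show ?thesis using X pv pd unfolding subgraph_def image_graph_def induced_def by auto
qed

lemma adj_bags_meet:
  assumes td: "tree_decomposition C T V" and reg: "regular_td C T V"
    and conC: "gconnected C" and d: "d \<in> gdarts T"
  shows "V (gtail T d) \<inter> V (ghead T d) \<noteq> {}"
proof
  assume disj: "V (gtail T d) \<inter> V (ghead T d) = {}"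
  have wfT: "wf_graph T" using td unfolding tree_decomposition_def is_tree_def by auto
  have bags: "\<forall>t\<in>gverts T. V t \<noteq> {} \<and> V t \<subseteq> gverts C"
    and cov: "gverts C = (\<Union>t\<in>gverts T. V t)"
    and dcov: "gdarts C = (\<Union>t\<in>gverts T. gdarts (induced C (V t)))"
    and sub: "\<forall>v\<in>gverts C. gconnected (induced T {t \<in> gverts T. v \<in> V t})"
    using td unfolding tree_decomposition_def by auto
  define s1 where "s1 = gtail T d"
  define K where "K = {s \<in> gverts T. (s1, s) \<in> (gadj (del_edge T d))\<^sup>*}"
  have s1T: "s1 \<in> gverts T" using wfT d unfolding wf_graph_def s1_def by auto
  have s1K: "s1 \<in> K" using s1T unfolding K_def by auto
  have A: "sep_side T V d = \<Union> (V ` K)"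
    unfolding sep_side_def K_def s1_def by (rule arg_cong[where f=Union]) blast
  have claim1: "b \<in> K" if x: "x \<in> V a" "a \<in> K" "b \<in> gverts T" "x \<in> V b" for x a b
  proof -
    define S where "S = {t \<in> gverts T. x \<in> V t}"
    have aT: "a \<in> gverts T" using x K_def by auto
    have xC: "x \<in> gverts C" using bags aT x by auto
    have "gconnected (induced T S)" using sub xC S_def by auto
    moreover have gvS: "gverts (induced T S) = S" by (simp add: induced_def)
    moreover have "a \<in> S" "b \<in> S" using x aT S_def by auto
    ultimately have "(a, b) \<in> (gadj (induced T S))\<^sup>*"
      unfolding gconnected_def by blast
    then show "b \<in> K"
    proof (induction rule: rtrancl_induct)
      case base
      then show ?case using x by simp
    next
      case (step c e)
      have "(c, e) \<in> {(gtail (induced T S) d, ghead (induced T S) d) | d. d \<in> gdarts (induced T S)}"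
        using step(2) unfolding gadj_def .
      then obtain d' where d0: "d' \<in> gdarts (induced T S)" "c = gtail (induced T S) d'"
        "e = ghead (induced T S) d'" by blast
      have ig: "gtail (induced T S) = gtail T" "ghead (induced T S) = ghead T"
        "gdarts (induced T S) = {d \<in> gdarts T. gtail T d \<in> S \<and> ghead T d \<in> S}"
        by (simp_all add: induced_def ghead_def fun_eq_iff)
      have d': "d' \<in> gdarts T" "gtail T d' \<in> S" "ghead T d' \<in> S"
        "c = gtail T d'" "e = ghead T d'" using d0 unfolding ig by auto
      have eT: "e \<in> gverts T" using d' S_def by auto
      show ?case
      proof (cases "d' = d")
        case True
        then show ?thesis using d' disj S_def by auto
      next
        case False
        note F1 = False
        show ?thesis
        proof (cases "d' = grev T d")
          case True
          then have "e = s1" using d' wfT d unfolding wf_graph_def ghead_def s1_def by auto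
          then show ?thesis using s1K by simp
        next
          case False
          then have "d' \<in> gdarts (del_edge T d)" using F1 d' unfolding del_edge_def by auto
          then have "(c, e) \<in> gadj (del_edge T d)"
            unfolding gadj_def using d' unfolding del_edge_def ghead_def by auto
          then show ?thesis using step(3) eT unfolding K_def
            by (auto intro: rtrancl_into_rtrancl)
        qed
      qed
    qed
  qed
  have AC: "\<Union> (V ` K) \<subseteq> gverts C" using bags unfolding K_def by auto
  have "sep_side T V d \<noteq> gverts C" using reg d unfolding regular_td_def by blast
  then have "\<not> gverts C \<subseteq> \<Union> (V ` K)" using AC A by blast
  then obtain y where y: "y \<in> gverts C" "y \<notin> \<Union> (V ` K)" by blast
  obtain u where u: "u \<in> V s1" using bags s1T by blast
  have uC: "u \<in> gverts C" using bags s1T u by blast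
  have "\<forall>u\<in>gverts C. \<forall>v\<in>gverts C. (u, v) \<in> (gadj C)\<^sup>*" using conC unfolding gconnected_def by simp
  then have "(u, y) \<in> (gadj C)\<^sup>*" using uC y by blast
  then have "y \<in> \<Union> (V ` K)"
  proof (induction rule: rtrancl_induct)
    case base
    then show ?case using u s1K by blast
  next
    case (step z w)
    have "(z, w) \<in> {(gtail C d, ghead C d) | d. d \<in> gdarts C}" using step(2) unfolding gadj_def .
    then obtain e where e: "e \<in> gdarts C" "z = gtail C e" "w = ghead C e" by blast
    then have "e \<in> (\<Union>t\<in>gverts T. gdarts (induced C (V t)))" using dcov by simp
    then obtain t where t: "t \<in> gverts T" "e \<in> gdarts (induced C (V t))" by blast
    then have "e \<in> {d \<in> gdarts C. gtail C d \<in> V t \<and> ghead C d \<in> V t}" by (simp add: induced_def)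
    then have zw: "z \<in> V t" "w \<in> V t" using e by auto
    from step(3) obtain a where a: "a \<in> K" "z \<in> V a" by auto
    have "t \<in> K" using claim1[OF a(2) a(1) t(1) zw(1)] .
    then show ?case using zw by auto
  qed
  then show False using y by simp
qed

theorem lemma3p9:
  fixes C :: "('v,'d) dgraph" and G :: "('w,'e) dgraph"
    and p :: "('v \<Rightarrow> 'w) \<times> ('d \<Rightarrow> 'e)"
    and T :: "('t,'a) dgraph" and V :: "'t \<Rightarrow> 'v set"
    and \<psi> :: "('v \<Rightarrow> 'v) \<times> ('d \<Rightarrow> 'd) \<Rightarrow> ('t \<Rightarrow> 't) \<times> ('a \<Rightarrow> 'a)"
  assumes "gconnected G"
    and "is_normal_covering C G p"
    and "tree_decomposition C T V"
    and "regular_td C T V"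
    and "canonical_via C T V (deck C p) \<psi>"
  shows "honest G (orbit_graph T (deck C p) \<psi>) (projected_parts C G p T V)"
proof -
  define D where "D = deck C p"
  define H where "H = orbit_graph T D \<psi>"
  define Gh where "Gh = projected_parts C G p T V"
  define Ob where "Ob = node_orbit D \<psi>"
  define rep where "rep h = (SOME t. t \<in> h \<and> t \<in> gverts T)" for h :: "'t set"
  have cov: "is_covering C G p" and norm: "\<forall>x\<in>gverts C. \<forall>y\<in>gverts C. fst p x = fst p y \<longrightarrow> (\<exists>\<phi>\<in>D. fst \<phi> x = y)"
    using assms(2) unfolding is_normal_covering_def D_def by auto
  have wfC: "wf_graph C" and wfG: "wf_graph G" and conC: "gconnected C"
    and surjV: "fst p ` gverts C = gverts G"
    and pd: "\<forall>d\<in>gdarts C. snd p d \<in> gdarts G \<and> fst p (gtail C d) = gtail G (snd p d)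
            \<and> snd p (grev C d) = grev G (snd p d)"
    and loc: "\<forall>x\<in>gverts C. bij_betw (snd p) {d \<in> gdarts C. gtail C d = x}
                                       {e \<in> gdarts G. gtail G e = fst p x}"
    using cov unfolding is_covering_def by auto
  have td: "tree_decomposition C T V" by fact
  have wfT: "wf_graph T" using td unfolding tree_decomposition_def is_tree_def by auto
  have bags: "\<forall>t\<in>gverts T. V t \<noteq> {} \<and> V t \<subseteq> gverts C"
    and tcov: "gverts C = (\<Union>t\<in>gverts T. V t)"
    and dcov: "gdarts C = (\<Union>t\<in>gverts T. gdarts (induced C (V t)))"
    and sub: "\<forall>v\<in>gverts C. gconnected (induced T {t \<in> gverts T. v \<in> V t})"
    using td unfolding tree_decomposition_def by auto
  have can1: "\<forall>\<phi>\<in>D. is_aut T (\<psi> \<phi>) \<and> (\<forall>t\<in>gverts T. fst \<phi> ` V t = V (fst (\<psi> \<phi>) t))"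
    and hom: "\<forall>\<phi>\<in>D. \<forall>\<chi>\<in>D. \<psi> (comp_pair \<phi> \<chi>) = comp_pair (\<psi> \<phi>) (\<psi> \<chi>)"
    using assms(5) unfolding canonical_via_def D_def by auto
  have PV: "fst p (fst \<phi> v) = fst p v" if "\<phi> \<in> D" "v \<in> gverts C" for \<phi> v
    using that unfolding D_def deck_def by auto
  have PD: "snd p (snd \<phi> d) = snd p d" if "\<phi> \<in> D" "d \<in> gdarts C" for \<phi> d
    using that unfolding D_def deck_def by auto
  have AUTC: "is_aut C \<phi>" if "\<phi> \<in> D" for \<phi>
    using that unfolding D_def deck_def by auto
  have AUTT: "is_aut T (\<psi> \<phi>)" if "\<phi> \<in> D" for \<phi>
    using that can1 by auto
  have psiV: "fst (\<psi> \<phi>) t \<in> gverts T" if "\<phi> \<in> D" "t \<in> gverts T" for \<phi> t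
    using aut_facts(1)[OF AUTT[OF that(1)] wfT that(2)] .
  have bagV: "V (fst (\<psi> \<phi>) t) = fst \<phi> ` V t" if "\<phi> \<in> D" "t \<in> gverts T" for \<phi> t
    using that can1 by auto
  have projV: "fst p ` V (fst (\<psi> \<phi>) t) = fst p ` V t" if "\<phi> \<in> D" "t \<in> gverts T" for \<phi> t
  proof -
    have "fst p ` V (fst (\<psi> \<phi>) t) = (fst p \<circ> fst \<phi>) ` V t" using bagV[OF that] by (simp add: image_comp)
    also have "\<dots> = fst p ` V t"
    proof (rule image_cong)
      fix x assume "x \<in> V t"
      then have "x \<in> gverts C" using bags that(2) by blast
      then show "(fst p \<circ> fst \<phi>) x = fst p x" using PV[OF that(1)] by simp
    qed simp
    finally show ?thesis .
  qed
  have idD: "(id, id) \<in> D" unfolding D_def by (rule deck_id)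
  have Odef: "Ob s = {fst (\<psi> \<phi>) s | \<phi>. \<phi> \<in> D}" for s
    unfolding Ob_def node_orbit_def ..
  have orbit: "Ob (fst (\<psi> \<phi>) t) = Ob t" if ph: "\<phi> \<in> D" and t: "t \<in> gverts T" for \<phi> t
  proof
    show "Ob (fst (\<psi> \<phi>) t) \<subseteq> Ob t"
    proof
      fix y assume "y \<in> Ob (fst (\<psi> \<phi>) t)"
      then obtain \<chi> where ch: "\<chi> \<in> D" "y = fst (\<psi> \<chi>) (fst (\<psi> \<phi>) t)" unfolding Odef by blast
      have "comp_pair \<chi> \<phi> \<in> D" using deck_comp ch(1) ph unfolding D_def by blast
      moreover have "y = fst (\<psi> (comp_pair \<chi> \<phi>)) t"
        using hom ch ph unfolding comp_pair_def by simp
      ultimately show "y \<in> Ob t" unfolding Odef by blast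
    qed
  next
    show "Ob t \<subseteq> Ob (fst (\<psi> \<phi>) t)"
    proof
      fix y assume "y \<in> Ob t"
      then obtain \<chi> where ch: "\<chi> \<in> D" "y = fst (\<psi> \<chi>) t" unfolding Odef by blast
      obtain \<phi>' where ph': "\<phi>' \<in> D" "comp_pair \<phi>' \<phi> = (id, id)"
        using deck_inv ph unfolding D_def by blast
      define \<chi>' where "\<chi>' = comp_pair \<chi> \<phi>'"
      have ch': "\<chi>' \<in> D" using deck_comp ch(1) ph'(1) unfolding D_def \<chi>'_def by blast
      have "comp_pair \<chi>' \<phi> = comp_pair \<chi> (comp_pair \<phi>' \<phi>)"
        unfolding \<chi>'_def comp_pair_def by (simp add: comp_assoc)
      also have "\<dots> = \<chi>" using ph'(2) unfolding comp_pair_def by simp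
      finally have "\<psi> \<chi> = comp_pair (\<psi> \<chi>') (\<psi> \<phi>)" using hom ch' ph by metis
      then have "y = fst (\<psi> \<chi>') (fst (\<psi> \<phi>) t)" using ch(2) unfolding comp_pair_def by simp
      then show "y \<in> Ob (fst (\<psi> \<phi>) t)" using ch' unfolding Odef by blast
    qed
  qed
  have inO: "fst (\<psi> (id, id)) t \<in> Ob t" for t using idD unfolding Odef by blast
  have repO: "rep (Ob t) \<in> Ob t \<and> rep (Ob t) \<in> gverts T" if t: "t \<in> gverts T" for t
  proof -
    have "\<exists>s. s \<in> Ob t \<and> s \<in> gverts T" using inO psiV[OF idD t] by blast
    then show ?thesis unfolding rep_def by (rule someI_ex)
  qed
  have repO2: "\<exists>\<phi>\<in>D. rep (Ob t) = fst (\<psi> \<phi>) t" if t: "t \<in> gverts T" for t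
    using repO[OF t] unfolding Odef by blast
  have Ghdef: "Gh h = image_graph G p (induced C (V (rep h)))" for h
    unfolding Gh_def projected_parts_def rep_def ..
  have GhV: "gverts (Gh (Ob t)) = fst p ` V t" if t: "t \<in> gverts T" for t
  proof -
    obtain \<phi> where ph: "\<phi> \<in> D" "rep (Ob t) = fst (\<psi> \<phi>) t" using repO2[OF t] by blast
    have "gverts (Gh (Ob t)) = fst p ` V (rep (Ob t))" unfolding Ghdef by (simp add: image_graph_def induced_def)
    also have "\<dots> = fst p ` V t" using ph projV[OF ph(1) t] by simp
    finally show ?thesis .
  qed
  have GhD: "gdarts (Gh h) = snd p ` {d \<in> gdarts C. gtail C d \<in> V (rep h) \<and> ghead C d \<in> V (rep h)}" for h
    unfolding Ghdef by (simp add: image_graph_def induced_def)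
  have HV: "uverts H = {Ob t | t. t \<in> gverts T}"
    unfolding H_def orbit_graph_def Ob_def by simp
  have HE: "uedges H = {{snd (\<psi> \<phi>) ` {d, grev T d} | \<phi>. \<phi> \<in> D} | d. d \<in> gdarts T}"
    unfolding H_def orbit_graph_def by simp
  have HU: "uends H E = {Ob (gtail T d) | d. d \<in> \<Union>E}" for E
    unfolding H_def orbit_graph_def Ob_def by simp
  have ends: "uends H {snd (\<psi> \<phi>) ` {d, grev T d} | \<phi>. \<phi> \<in> D} = {Ob (gtail T d), Ob (ghead T d)}"
    if d: "d \<in> gdarts T" for d
  proof -
    have tT: "gtail T d \<in> gverts T" and hT: "ghead T d \<in> gverts T" and rd: "grev T d \<in> gdarts T"
      using d wfT unfolding wf_graph_def ghead_def by auto
    have tl1: "gtail T (snd (\<psi> \<phi>) d) = fst (\<psi> \<phi>) (gtail T d)" if "\<phi> \<in> D" for \<phi>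
      using aut_facts(3)[OF AUTT[OF that] wfT d] by simp
    have tl2: "gtail T (snd (\<psi> \<phi>) (grev T d)) = fst (\<psi> \<phi>) (ghead T d)" if "\<phi> \<in> D" for \<phi>
      using aut_facts(3)[OF AUTT[OF that] wfT rd] unfolding ghead_def by simp
    have U: "\<Union>{snd (\<psi> \<phi>) ` {d, grev T d} | \<phi>. \<phi> \<in> D} = {snd (\<psi> \<phi>) d | \<phi>. \<phi> \<in> D} \<union> {snd (\<psi> \<phi>) (grev T d) | \<phi>. \<phi> \<in> D}"
      by blast
    show ?thesis
    proof
      show "uends H {snd (\<psi> \<phi>) ` {d, grev T d} | \<phi>. \<phi> \<in> D} \<subseteq> {Ob (gtail T d), Ob (ghead T d)}"
      proof
        fix h assume "h \<in> uends H {snd (\<psi> \<phi>) ` {d, grev T d} | \<phi>. \<phi> \<in> D}"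
        then obtain d' where d': "h = Ob (gtail T d')" "d' \<in> {snd (\<psi> \<phi>) d | \<phi>. \<phi> \<in> D} \<union> {snd (\<psi> \<phi>) (grev T d) | \<phi>. \<phi> \<in> D}"
          unfolding HU U by blast
        then show "h \<in> {Ob (gtail T d), Ob (ghead T d)}"
          using tl1 tl2 orbit tT hT by auto
      qed
    next
      show "{Ob (gtail T d), Ob (ghead T d)} \<subseteq> uends H {snd (\<psi> \<phi>) ` {d, grev T d} | \<phi>. \<phi> \<in> D}"
      proof -
        have "Ob (gtail T d) = Ob (gtail T (snd (\<psi> (id, id)) d))" using tl1[OF idD] orbit[OF idD tT] by simp
        moreover have "Ob (ghead T d) = Ob (gtail T (snd (\<psi> (id, id)) (grev T d)))" using tl2[OF idD] orbit[OF idD hT] by simp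
        ultimately show ?thesis unfolding HU U using idD by blast
      qed
    qed
  qed
  have vG: "gverts G = (\<Union>h\<in>uverts H. gverts (Gh h))"
  proof
    show "gverts G \<subseteq> (\<Union>h\<in>uverts H. gverts (Gh h))"
    proof
      fix v assume "v \<in> gverts G"
      then have "v \<in> fst p ` gverts C" using surjV by simp
      then obtain x where x: "x \<in> gverts C" "v = fst p x" by (rule imageE) simp
      then have "x \<in> (\<Union>t\<in>gverts T. V t)" using tcov by simp
      then obtain t where t: "t \<in> gverts T" "x \<in> V t" by (rule UN_E) simp
      have "Ob t \<in> uverts H" unfolding HV using t(1) by blast
      moreover have "v \<in> gverts (Gh (Ob t))" unfolding GhV[OF t(1)] using x t by simp
      ultimately show "v \<in> (\<Union>h\<in>uverts H. gverts (Gh h))" by (rule UN_I)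
    qed
  next
    show "(\<Union>h\<in>uverts H. gverts (Gh h)) \<subseteq> gverts G"
    proof
      fix v assume "v \<in> (\<Union>h\<in>uverts H. gverts (Gh h))"
      then obtain h where h: "h \<in> uverts H" "v \<in> gverts (Gh h)" by (rule UN_E) simp
      then obtain t where t: "t \<in> gverts T" "h = Ob t" unfolding HV by blast
      then have "v \<in> fst p ` V t" using h GhV[OF t(1)] by simp
      moreover have "V t \<subseteq> gverts C" using bags t(1) by simp
      ultimately have "v \<in> fst p ` gverts C" by (meson image_mono subsetD)
      then show "v \<in> gverts G" using surjV by simp
    qed
  qed
  have subg: "\<forall>h\<in>uverts H. subgraph (Gh h) G"
  proof
    fix h assume "h \<in> uverts H"
    then obtain t where t: "t \<in> gverts T" "h = Ob t" unfolding HV by blast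
    then have "rep h \<in> gverts T" using repO by simp
    then have VC: "V (rep h) \<subseteq> gverts C" using bags by simp
    have pv: "\<forall>v\<in>gverts C. fst p v \<in> gverts G" using surjV by blast
    show "subgraph (Gh h) G" unfolding Ghdef using image_sub[OF wfC wfG VC pv pd] .
  qed
  have dG: "gdarts G = (\<Union>h\<in>uverts H. gdarts (Gh h))"
  proof
    show "gdarts G \<subseteq> (\<Union>h\<in>uverts H. gdarts (Gh h))"
    proof
      fix e assume e: "e \<in> gdarts G"
      have "\<forall>d\<in>gdarts G. gtail G d \<in> gverts G" using wfG unfolding wf_graph_def by simp
      then have "gtail G e \<in> fst p ` gverts C" using e surjV by simp
      then obtain x where x: "x \<in> gverts C" "gtail G e = fst p x" by (rule imageE) simp
      then have ex: "e \<in> {e \<in> gdarts G. gtail G e = fst p x}" using e by simp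
      have "bij_betw (snd p) {d \<in> gdarts C. gtail C d = x} {e \<in> gdarts G. gtail G e = fst p x}"
        using loc x(1) by simp
      then have "snd p ` {d \<in> gdarts C. gtail C d = x} = {e \<in> gdarts G. gtail G e = fst p x}"
        by (simp add: bij_betw_def)
      then have "e \<in> snd p ` {d \<in> gdarts C. gtail C d = x}" using ex by simp
      then obtain d where d: "d \<in> gdarts C" "e = snd p d" by blast
      then have "d \<in> (\<Union>t\<in>gverts T. gdarts (induced C (V t)))" using dcov by simp
      then obtain t where t: "t \<in> gverts T" "d \<in> gdarts (induced C (V t))" by (rule UN_E) simp
      have dt: "gtail C d \<in> V t" "ghead C d \<in> V t" using t(2) by (simp_all add: induced_def)
      obtain \<phi> where ph: "\<phi> \<in> D" "rep (Ob t) = fst (\<psi> \<phi>) t" using repO2[OF t(1)] by blast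
      have d2: "snd \<phi> d \<in> gdarts C" using aut_facts(2)[OF AUTC[OF ph(1)] wfC d(1)] .
      have "gtail C (snd \<phi> d) = fst \<phi> (gtail C d)" using aut_facts(3)[OF AUTC[OF ph(1)] wfC d(1)] by simp
      then have t2: "gtail C (snd \<phi> d) \<in> V (rep (Ob t))" using ph bagV[OF ph(1) t(1)] dt by simp
      have "ghead C (snd \<phi> d) = fst \<phi> (ghead C d)" using aut_facts(5)[OF AUTC[OF ph(1)] wfC d(1)] by simp
      then have h2: "ghead C (snd \<phi> d) \<in> V (rep (Ob t))" using ph bagV[OF ph(1) t(1)] dt by simp
      have "e = snd p (snd \<phi> d)" using PD[OF ph(1) d(1)] d by simp
      then have "e \<in> gdarts (Gh (Ob t))" unfolding GhD using d2 t2 h2 by simp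
      moreover have "Ob t \<in> uverts H" unfolding HV using t(1) by blast
      ultimately show "e \<in> (\<Union>h\<in>uverts H. gdarts (Gh h))" by (rule UN_I[rotated])
    qed
  next
    show "(\<Union>h\<in>uverts H. gdarts (Gh h)) \<subseteq> gdarts G"
    proof
      fix e assume "e \<in> (\<Union>h\<in>uverts H. gdarts (Gh h))"
      then obtain h where h: "h \<in> uverts H" "e \<in> gdarts (Gh h)" by (rule UN_E) simp
      have "subgraph (Gh h) G" using subg h(1) by simp
      then have "gdarts (Gh h) \<subseteq> gdarts G" unfolding subgraph_def by simp
      then show "e \<in> gdarts G" using h(2) by (rule subsetD)
    qed
  qed
  have conn: "uconnected_on H {h \<in> uverts H. v \<in> gverts (Gh h)}" if v: "v \<in> gverts G" for v
  proof -
    define X where "X = {h \<in> uverts H. v \<in> gverts (Gh h)}"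
    define R where "R = {(a, b). a \<in> X \<and> b \<in> X \<and> (\<exists>f\<in>uedges H. uends H f = {a, b})}"
    have XI: "Ob s \<in> X" if "s \<in> gverts T" "x \<in> V s" "fst p x = v" for s x
    proof -
      have "Ob s \<in> uverts H" unfolding HV using that(1) by blast
      moreover have "v \<in> gverts (Gh (Ob s))" unfolding GhV[OF that(1)] using that(2,3) by blast
      ultimately show ?thesis unfolding X_def by simp
    qed
    have XE: "\<exists>t x. t \<in> gverts T \<and> h = Ob t \<and> x \<in> V t \<and> fst p x = v" if "h \<in> X" for h
    proof -
      have h: "h \<in> uverts H" "v \<in> gverts (Gh h)" using that unfolding X_def by simp_all
      obtain t where t: "t \<in> gverts T" "h = Ob t" using h(1) unfolding HV by blast
      have "v \<in> fst p ` V t" using h(2) unfolding t(2) GhV[OF t(1)] .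
      then obtain x where "x \<in> V t" "fst p x = v" by (rule imageE) simp
      then show ?thesis using t by blast
    qed
    have "v \<in> (\<Union>h\<in>uverts H. gverts (Gh h))" using v vG by simp
    then obtain h0 where "h0 \<in> uverts H" "v \<in> gverts (Gh h0)" by (rule UN_E) simp
    then have "h0 \<in> X" unfolding X_def by simp
    then have ne: "X \<noteq> {}" by blast
    have XH: "X \<subseteq> uverts H" unfolding X_def by blast
    have path: "(h1, h2) \<in> R\<^sup>*" if h1: "h1 \<in> X" and h2: "h2 \<in> X" for h1 h2
    proof -
      obtain t1 x1 where t1: "t1 \<in> gverts T" "h1 = Ob t1" "x1 \<in> V t1" "fst p x1 = v"
        using XE[OF h1] by blast
      obtain t2 x2 where t2: "t2 \<in> gverts T" "h2 = Ob t2" "x2 \<in> V t2" "fst p x2 = v"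
        using XE[OF h2] by blast
      have x1C: "x1 \<in> gverts C" using bags t1(1) t1(3) by blast
      have x2C: "x2 \<in> gverts C" using bags t2(1) t2(3) by blast
      have "fst p x1 = fst p x2" using t1(4) t2(4) by simp
      then obtain \<phi> where ph: "\<phi> \<in> D" "fst \<phi> x1 = x2" using norm x1C x2C by blast
      define t1' where "t1' = fst (\<psi> \<phi>) t1"
      have t1'T: "t1' \<in> gverts T" using psiV[OF ph(1) t1(1)] unfolding t1'_def .
      have "V t1' = fst \<phi> ` V t1" using bagV[OF ph(1) t1(1)] unfolding t1'_def .
      then have x2t1': "x2 \<in> V t1'" using ph(2) t1(3) by blast
      have Ot1': "Ob t1' = h1" using orbit[OF ph(1) t1(1)] t1(2) unfolding t1'_def by simp
      define S where "S = {t \<in> gverts T. x2 \<in> V t}"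
      have gc: "gconnected (induced T S)" using sub x2C unfolding S_def by blast
      have gvS: "gverts (induced T S) = S" by (simp add: induced_def)
      have "\<forall>u\<in>S. \<forall>w\<in>S. (u, w) \<in> (gadj (induced T S))\<^sup>*" using gc unfolding gconnected_def gvS by simp
      moreover have "t1' \<in> S" "t2 \<in> S" using t1'T x2t1' t2(1) t2(3) unfolding S_def by simp_all
      ultimately have "(t1', t2) \<in> (gadj (induced T S))\<^sup>*" by blast
      then have "(Ob t1', Ob t2) \<in> R\<^sup>*"
      proof (induction rule: rtrancl_induct)
        case base
        then show ?case by simp
      next
        case (step c e)
        have "(c, e) \<in> {(gtail (induced T S) d, ghead (induced T S) d) | d. d \<in> gdarts (induced T S)}"
          using step(2) unfolding gadj_def .
        then obtain d' where d0: "d' \<in> gdarts (induced T S)" "c = gtail (induced T S) d'"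
          "e = ghead (induced T S) d'" by blast
        have ig: "gtail (induced T S) = gtail T" "ghead (induced T S) = ghead T"
          "gdarts (induced T S) = {d \<in> gdarts T. gtail T d \<in> S \<and> ghead T d \<in> S}"
          by (simp_all add: induced_def ghead_def fun_eq_iff)
        have d': "d' \<in> gdarts T" "gtail T d' \<in> S" "ghead T d' \<in> S"
          "c = gtail T d'" "e = ghead T d'" using d0 unfolding ig by auto
        have inX: "Ob s \<in> X" if "s \<in> S" for s
        proof -
          have sT: "s \<in> gverts T" "x2 \<in> V s" using that unfolding S_def by simp_all
          show ?thesis using XI[OF sT t2(4)] .
        qed
        have cX: "Ob c \<in> X" using inX d'(2,4) by simp
        have eX: "Ob e \<in> X" using inX d'(3,5) by simp
        have fE: "{snd (\<psi> \<phi>) ` {d', grev T d'} | \<phi>. \<phi> \<in> D} \<in> uedges H"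
          unfolding HE using d'(1) by blast
        have "uends H {snd (\<psi> \<phi>) ` {d', grev T d'} | \<phi>. \<phi> \<in> D} = {Ob c, Ob e}"
          using ends[OF d'(1)] d'(4,5) by simp
        then have "\<exists>f\<in>uedges H. uends H f = {Ob c, Ob e}" using fE by blast
        then have "(Ob c, Ob e) \<in> R" unfolding R_def using cX eX by simp
        then show ?case using step(3) by (rule rtrancl_into_rtrancl[rotated])
      qed
      then show ?thesis using Ot1' t2(2) by simp
    qed
    have "uconnected_on H X" unfolding uconnected_on_def
      using ne XH path unfolding R_def by blast
    then show ?thesis unfolding X_def .
  qed
  have hon: "\<forall>f\<in>uedges H. \<forall>h h'. uends H f = {h, h'} \<longrightarrow> gverts (Gh h) \<inter> gverts (Gh h') \<noteq> {}"
  proof (intro ballI allI impI)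
    fix f h h' assume f: "f \<in> uedges H" and hh: "uends H f = {h, h'}"
    obtain d where d: "d \<in> gdarts T" "f = {snd (\<psi> \<phi>) ` {d, grev T d} | \<phi>. \<phi> \<in> D}"
      using f unfolding HE by blast
    have "\<forall>d\<in>gdarts T. gtail T d \<in> gverts T \<and> grev T d \<in> gdarts T"
      using wfT unfolding wf_graph_def by simp
    then have tT: "gtail T d \<in> gverts T" and hT: "ghead T d \<in> gverts T"
      using d(1) unfolding ghead_def by simp_all
    have "V (gtail T d) \<inter> V (ghead T d) \<noteq> {}" using adj_bags_meet[OF td assms(4) conC d(1)] .
    then obtain x where x: "x \<in> V (gtail T d)" "x \<in> V (ghead T d)" by blast
    have e: "{h, h'} = {Ob (gtail T d), Ob (ghead T d)}" using ends[OF d(1)] d(2) hh by simp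
    have g1: "fst p x \<in> gverts (Gh (Ob (gtail T d)))" unfolding GhV[OF tT] using x(1) by (rule imageI)
    have g2: "fst p x \<in> gverts (Gh (Ob (ghead T d)))" unfolding GhV[OF hT] using x(2) by (rule imageI)
    have "h \<in> {Ob (gtail T d), Ob (ghead T d)}" "h' \<in> {Ob (gtail T d), Ob (ghead T d)}"
      using e by blast+
    then have "fst p x \<in> gverts (Gh h)" "fst p x \<in> gverts (Gh h')" using g1 g2 by auto
    then show "gverts (Gh h) \<inter> gverts (Gh h') \<noteq> {}" by blast
  qed
  have "graph_decomposition G H Gh"
    unfolding graph_decomposition_def using subg vG dG conn by blast
  then show ?thesis using hon unfolding honest_def H_def Gh_def D_def by simp
qed

end
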